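(* For every odd positive integer $m$, the set of nonnegative integers $s$ such that $m\nmid \binom{2^{s+1}}{2^s}$ has asymptotic density $0$; that is, $\#\{0\le s<a : m\nmid \binom{2^{s+1}}{2^s}\}/a\to 0$ as $a\to\infty$. *)

theory Defs
  imports Complex_Main
begin

end

theory Submission
  imports Defs "HOL-Number_Theory.Number_Theory"
begin

function vf :: "nat \<Rightarrow> nat \<Rightarrow> nat" where
  "vf p n = (if p \<le> 1 \<or> n = 0 then 0 else n div p + vf p (n div p))"
  by auto
termination by (relation "measure snd") auto

declare vf.simps[simp del]

lemma vf_eq: "p > 1 \<Longrightarrow> vf p n = n div p + vf p (n div p)"
  by (subst vf.simps) (auto simp: vf.simps[of p 0])

lemma vf_Suc:
  assumes p: "prime p"
  shows "vf p (Suc n) = vf p n + multiplicity p (Suc n)"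
  using p
proof (induction n rule: less_induct)
  case (less n)
  have p1: "p > 1" using p prime_gt_1_nat by blast
  show ?case
  proof (cases "p dvd Suc n")
    case False
    then have "Suc n div p = n div p"
      by (metis Suc_eq_plus1 div_Suc dvd_eq_mod_eq_0)
    moreover have "multiplicity p (Suc n) = 0" using False not_dvd_imp_multiplicity_0 by blast
    ultimately show ?thesis using vf_eq[OF p1, of n] vf_eq[OF p1, of "Suc n"] by simp
  next
    case True
    then obtain t where t: "Suc n = p * t" by blast
    have t0: "t > 0" using t by (cases t) auto
    have sd: "Suc n div p = t" using t p1 by simp
    have nd: "n div p = t - 1"
    proof -
      have e: "n = (p - 1) + (t - 1) * p" using t t0 p1
        by (cases t) (auto simp: algebra_simps)
      have "((p - 1) + (t - 1) * p) div p = (t - 1) + (p - 1) div p"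
        using p1 by (intro div_mult_self1) simp
      then have "n div p = (t - 1) + (p - 1) div p" using e by simp
      then show ?thesis using p1 by simp
    qed
    have "t - 1 < n"
    proof -
      have "t < p * t" using t0 p1 by simp
      then show ?thesis using t t0 by linarith
    qed
    from less.IH[OF this p] have IH: "vf p t = vf p (t - 1) + multiplicity p t" using t0 by simp
    have "multiplicity p (Suc n) = Suc (multiplicity p t)"
      unfolding t using t0 p p1 by (subst multiplicity_times_same) auto
    then show ?thesis using vf_eq[OF p1, of n] vf_eq[OF p1, of "Suc n"] sd nd IH t0 by simp
  qed
qed


lemma mult_fact: "prime p \<Longrightarrow> multiplicity p (fact n :: nat) = vf p n"
proof (induction n)
  case 0
  have "vf p 0 = 0" by (simp add: vf.simps)
  then show ?case by simp
next
  case (Suc n)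
  have "multiplicity p (fact (Suc n) :: nat) = multiplicity p (Suc n * fact n :: nat)" by simp
  also have "\<dots> = multiplicity p (Suc n) + multiplicity p (fact n :: nat)"
    using Suc.prems by (intro prime_elem_multiplicity_mult_distrib) auto
  finally show ?case using Suc vf_Suc[OF Suc.prems, of n] by simp
qed

fun cnt :: "nat \<Rightarrow> nat \<Rightarrow> nat \<Rightarrow> nat" where
  "cnt p 0 n = 0"
| "cnt p (Suc N) n = (if 2 * (n mod p) > p then 1 else 0) + cnt p N (n div p)"

lemma cnt_zero: "p > 0 \<Longrightarrow> cnt p N 0 = 0"
  by (induction N) auto

lemma vf_carry:
  assumes p1: "p > 1" and c: "c \<le> 1"
  shows "vf p (2 * n + c) \<ge> 2 * vf p n + cnt p N n"
  using c
proof (induction n arbitrary: N c rule: less_induct)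
  case (less n)
  show ?case
  proof (cases "n = 0")
    case True
    then show ?thesis using p1 by (simp add: cnt_zero vf.simps[of p 0])
  next
    case False
    define d where "d = n mod p"
    define n' where "n' = n div p"
    define c' where "c' = (2 * d + c) div p"
    have dp: "d < p" using p1 d_def by simp
    have ndec: "n = d + n' * p" using d_def n'_def by simp
    have e2: "2 * n + c = (2 * d + c) + (2 * n') * p" using ndec by simp
    have "((2 * d + c) + (2 * n') * p) div p = 2 * n' + (2 * d + c) div p"
      using p1 by (intro div_mult_self1) simp
    then have q: "(2 * n + c) div p = 2 * n' + c'"
      using e2 c'_def by (simp only:)
    have c'1: "c' \<le> 1"
    proof -
      have "2 * d + c < 2 * p" using dp less.prems by linarith
      then have "(2 * d + c) div p < 2" by (intro less_mult_imp_div_less) (simp add: mult.commute)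
      then show ?thesis unfolding c'_def by simp
    qed
    have big: "2 * d > p \<Longrightarrow> c' \<ge> 1"
      proof -
      assume "2 * d > p"
      then have "p * 1 \<le> 2 * d + c" by simp
      then have "0 < (2 * d + c) div p" using p1 by (simp add: div_greater_zero_iff)
      then have "1 \<le> (2 * d + c) div p" by simp
      then show ?thesis unfolding c'_def .
    qed
    have n'lt: "n' < n" using False p1 n'_def by simp
    have vfn: "vf p n = n div p + vf p n'" using vf_eq[OF p1, of n] n'_def by simp
    have vf2: "vf p (2 * n + c) = 2 * n' + c' + vf p (2 * n' + c')"
      using vf_eq[OF p1, of "2 * n + c"] q by simp
    show ?thesis
    proof (cases N)
      case 0
      from less.IH[OF n'lt c'1, of 0] show ?thesis using vfn vf2 0 n'_def by simp
    next
      case (Suc M)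
      from less.IH[OF n'lt c'1, of M]
      have "vf p (2 * n' + c') \<ge> 2 * vf p n' + cnt p M n'" .
      moreover have "cnt p N n = (if 2 * d > p then 1 else 0) + cnt p M n'"
        using Suc d_def n'_def by simp
      ultimately show ?thesis using vfn vf2 big n'_def by auto
    qed
  qed
qed


lemma binom_cnt:
  assumes p: "prime p"
  shows "p ^ cnt p N n dvd ((2 * n) choose n)"
proof -
  have p1: "p > 1" using p prime_gt_1_nat by blast
  have fe: "fact n * fact n * ((2 * n) choose n) = (fact (2 * n) :: nat)"
    using binomial_fact_lemma[of n "2 * n"] by simp
  have C0: "((2 * n) choose n) \<noteq> 0" by simp
  have "multiplicity p (fact (2 * n) :: nat) =
        multiplicity p (fact n * fact n :: nat) + multiplicity p ((2 * n) choose n)"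
    using p C0 by (subst fe[symmetric], intro prime_elem_multiplicity_mult_distrib) auto
  also have "multiplicity p (fact n * fact n :: nat) = vf p n + vf p n"
    using p by (subst prime_elem_multiplicity_mult_distrib) (auto simp: mult_fact)
  finally have e: "vf p (2 * n) = 2 * vf p n + multiplicity p ((2 * n) choose n)"
    using p by (simp add: mult_fact)
  have "vf p (2 * n + 0) \<ge> 2 * vf p n + cnt p N n" using vf_carry[OF p1, of 0] by blast
  then have "cnt p N n \<le> multiplicity p ((2 * n) choose n)" using e by simp
  then show ?thesis by (rule multiplicity_dvd')
qed

lemma cnt_split: "cnt p (E + N) n = cnt p E n + cnt p N (n div p ^ E)"
  by (induction E arbitrary: n) (auto simp: div_mult2_eq)

lemma cnt_mod: "p > 0 \<Longrightarrow> cnt p N (x mod p ^ N) = cnt p N x"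
proof (induction N arbitrary: x)
  case 0 then show ?case by simp
next
  case (Suc N)
  have a: "x mod p ^ Suc N mod p = x mod p"
    by (simp add: mod_mod_cancel)
  have b: "x mod p ^ Suc N div p = x div p mod p ^ N"
  proof -
    have "x mod (p * p ^ N) = p * (x div p mod p ^ N) + x mod p" by (rule mod_mult2_eq)
    then show ?thesis using Suc.prems by simp
  qed
  show ?case using a b Suc by simp
qed


lemma pow_expand: "\<exists>w. (1 + q * v) ^ c = 1 + c * q * v + q\<^sup>2 * (w::nat)"
proof (induction c)
  case 0 then show ?case by (auto intro: exI[of _ 0])
next
  case (Suc c)
  then obtain w where w: "(1 + q * v) ^ c = 1 + c * q * v + q\<^sup>2 * w" by blast
  have "(1 + q * v) ^ Suc c = (1 + c * q * v + q\<^sup>2 * w) * (1 + q * v)" using w by simp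
  also have "\<dots> = 1 + Suc c * q * v + q\<^sup>2 * (c * v\<^sup>2 + w + q * w * v)"
    by (simp add: algebra_simps power2_eq_square)
  finally show ?case by blast
qed

lemma lift_step:
  assumes p: "prime p" and a: "a \<ge> 2" and v: "\<not> p dvd v"
  shows "\<exists>v'. (1 + p ^ a * v) ^ p = 1 + p ^ (a + 1) * v' \<and> \<not> p dvd v'"
proof -
  obtain w where w: "(1 + p ^ a * v) ^ p = 1 + p * p ^ a * v + (p ^ a)\<^sup>2 * w"
    using pow_expand[of "p ^ a" v p] by blast
  have "(p ^ a)\<^sup>2 = p ^ (a + a)" by (simp add: power2_eq_square power_add)
  also have "a + a = (a + 1) + (a - 1)" using a by simp
  finally have "(p ^ a)\<^sup>2 = p ^ (a + 1) * p ^ (a - 1)" by (simp only: power_add)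
  then have "(1 + p ^ a * v) ^ p = 1 + p ^ (a + 1) * (v + p ^ (a - 1) * w)"
    using w by (simp add: algebra_simps)
  moreover have "\<not> p dvd (v + p ^ (a - 1) * w)"
  proof
    assume "p dvd (v + p ^ (a - 1) * w)"
    moreover have "p dvd p ^ (a - 1) * w"
    proof -
      obtain b where "a = b + 2" using a by (metis add.commute le_Suc_ex)
      then show ?thesis by simp
    qed
    ultimately have "p dvd v" by (simp add: dvd_add_left_iff)
    with v show False by simp
  qed
  ultimately show ?thesis by blast
qed

lemma tower:
  assumes p: "prime p" and e: "e \<ge> 2" and u: "\<not> p dvd u"
  shows "\<exists>u'. (1 + p ^ e * u) ^ (p ^ j) = 1 + p ^ (e + j) * u' \<and> \<not> p dvd u'"
proof (induction j)
  case 0 then show ?case using u by auto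
next
  case (Suc j)
  then obtain u' where u': "(1 + p ^ e * u) ^ (p ^ j) = 1 + p ^ (e + j) * u'" "\<not> p dvd u'" by blast
  have "(1 + p ^ e * u) ^ (p ^ Suc j) = ((1 + p ^ e * u) ^ (p ^ j)) ^ p"
    by (simp add: power_mult[symmetric] mult.commute)
  also have "\<dots> = (1 + p ^ (e + j) * u') ^ p" using u' by simp
  finally show ?case using lift_step[OF p _ u'(2), of "e + j"] e by simp
qed

lemma noncong:
  assumes p: "prime p" and e: "e \<ge> 2" and u: "\<not> p dvd u"
    and c: "0 < c" "c < p ^ N"
  shows "\<not> p ^ (e + N) dvd ((1 + p ^ e * u) ^ c - 1)"
proof
  assume H: "p ^ (e + N) dvd ((1 + p ^ e * u) ^ c - 1)"
  have p1: "p > 1" using p prime_gt_1_nat by blast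
  obtain c' where c': "c = p ^ multiplicity p c * c'" "\<not> p dvd c'"
    using multiplicity_decompose'[of c p] c p1 by auto
  define j where "j = multiplicity p c"
  have "p ^ j \<le> c" using c' c j_def by (metis dvd_imp_le dvd_triv_left)
  then have "p ^ j < p ^ N" using c by simp
  then have jN: "j < N" using p1 by (simp add: power_strict_increasing_iff)
  obtain u' where u': "(1 + p ^ e * u) ^ (p ^ j) = 1 + p ^ (e + j) * u'" "\<not> p dvd u'"
    using tower[OF p e u] by blast
  obtain w where w: "(1 + p ^ (e + j) * u') ^ c' = 1 + c' * p ^ (e + j) * u' + (p ^ (e + j))\<^sup>2 * w"
    using pow_expand by blast
  have "(1 + p ^ e * u) ^ c = ((1 + p ^ e * u) ^ (p ^ j)) ^ c'"
    using c' j_def by (metis power_mult)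
  then have X: "(1 + p ^ e * u) ^ c - 1 = c' * p ^ (e + j) * u' + (p ^ (e + j))\<^sup>2 * w"
    using u' w by simp
  have d1: "p ^ (e + j + 1) dvd p ^ (e + N)" using jN by (intro le_imp_power_dvd) simp
  have d2: "p ^ (e + j + 1) dvd (p ^ (e + j))\<^sup>2 * w"
  proof -
    have "p ^ (e + j + 1) dvd (p ^ (e + j))\<^sup>2"
      unfolding power_mult[symmetric] using e by (intro le_imp_power_dvd) simp
    then show ?thesis by simp
  qed
  have "p ^ (e + j + 1) dvd c' * p ^ (e + j) * u' + (p ^ (e + j))\<^sup>2 * w"
    using dvd_trans[OF d1 H] X by simp
  then have "p ^ (e + j + 1) dvd c' * p ^ (e + j) * u'"
    using d2 by (simp add: dvd_add_left_iff)
  then have "p ^ (e + j) * p dvd p ^ (e + j) * (c' * u')" by (simp add: algebra_simps)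
  then have "p dvd c' * u'" using p1 by simp
  then show False using c'(2) u'(2) p by (simp add: prime_dvd_mult_iff)
qed


fun r :: "real \<Rightarrow> nat \<Rightarrow> nat \<Rightarrow> real" where
  "r \<beta> 0 k = (if k = 0 then 0 else 1)"
| "r \<beta> (Suc N) 0 = 0"
| "r \<beta> (Suc N) (Suc k) = (1 - \<beta>) * r \<beta> N k + \<beta> * r \<beta> N (Suc k)"

lemma r_zero: "r \<beta> N 0 = 0" by (cases N) auto

lemma r_bounds: "0 \<le> \<beta> \<Longrightarrow> \<beta> \<le> 1 \<Longrightarrow> 0 \<le> r \<beta> N k \<and> r \<beta> N k \<le> 1"
proof (induction N arbitrary: k)
  case 0 then show ?case by simp
next
  case (Suc N)
  show ?case
  proof (cases k)
    case 0 then show ?thesis by simp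
  next
    case (Suc k')
    have a: "0 \<le> r \<beta> N k'" "r \<beta> N k' \<le> 1" "0 \<le> r \<beta> N (Suc k')" "r \<beta> N (Suc k') \<le> 1"
      using Suc.IH Suc.prems by auto
    have "(1 - \<beta>) * r \<beta> N k' + \<beta> * r \<beta> N (Suc k') \<le> (1 - \<beta>) * 1 + \<beta> * 1"
      using a Suc.prems by (intro add_mono mult_left_mono) auto
    moreover have "0 \<le> (1 - \<beta>) * r \<beta> N k' + \<beta> * r \<beta> N (Suc k')"
      using a Suc.prems by simp
    ultimately show ?thesis using Suc by simp
  qed
qed

lemma r_mono: "0 \<le> \<beta> \<Longrightarrow> \<beta> \<le> 1 \<Longrightarrow> r \<beta> N k \<le> r \<beta> N (Suc k)"
proof (induction N arbitrary: k)
  case 0 then show ?case by simp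
next
  case (Suc N)
  show ?case
  proof (cases k)
    case 0 then show ?thesis using r_bounds[OF Suc.prems, of "Suc N" "Suc 0"] by simp
  next
    case (Suc k')
    have "(1 - \<beta>) * r \<beta> N k' + \<beta> * r \<beta> N (Suc k') \<le>
          (1 - \<beta>) * r \<beta> N (Suc k') + \<beta> * r \<beta> N (Suc (Suc k'))"
      using Suc.IH Suc.prems by (intro add_mono mult_left_mono) auto
    then show ?thesis using Suc by simp
  qed
qed

lemma r_lim: assumes "0 \<le> \<beta>" "\<beta> < 1" shows "(\<lambda>N. r \<beta> N k) \<longlonglongrightarrow> 0"
proof (induction k)
  case 0 then show ?case by (simp add: r_zero)
next
  case (Suc k)
  have b1: "\<beta> \<le> 1" using assms by simp
  have dec: "decseq (\<lambda>N. r \<beta> N (Suc k))"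
  proof (rule decseq_SucI)
    fix N
    have "(1 - \<beta>) * r \<beta> N k + \<beta> * r \<beta> N (Suc k) \<le>
          (1 - \<beta>) * r \<beta> N (Suc k) + \<beta> * r \<beta> N (Suc k)"
      using r_mono[OF assms(1) b1] assms by (intro add_mono mult_left_mono) auto
    then show "r \<beta> (Suc N) (Suc k) \<le> r \<beta> N (Suc k)" by (simp add: algebra_simps)
  qed
  have nn: "\<forall>i. 0 \<le> r \<beta> i (Suc k)" using r_bounds[OF assms(1) b1] by blast
  obtain L where L: "(\<lambda>N. r \<beta> N (Suc k)) \<longlonglongrightarrow> L"
    using decseq_convergent[OF dec nn] by blast
  have "(\<lambda>N. r \<beta> (Suc N) (Suc k)) \<longlonglongrightarrow> L" using L by (rule LIMSEQ_Suc)
  moreover have "(\<lambda>N. r \<beta> (Suc N) (Suc k)) \<longlonglongrightarrow> (1 - \<beta>) * 0 + \<beta> * L"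
    unfolding r.simps by (intro tendsto_intros Suc L)
  ultimately have "L = (1 - \<beta>) * 0 + \<beta> * L" by (rule LIMSEQ_unique)
  then have "(1 - \<beta>) * L = 0" by (simp add: algebra_simps)
  then have "L = 0" using assms by simp
  then show ?case using L by simp
qed

definition W :: "nat \<Rightarrow> nat \<Rightarrow> nat \<Rightarrow> nat set" where
  "W p N k = {w. w < p ^ N \<and> cnt p N w < k}"

lemma W_card:
  assumes p1: "p > 1"
  shows "real (card (W p N k)) \<le> real p ^ N *
     r (real (card {d. d < p \<and> \<not> 2 * d > p}) / real p) N k"
proof (induction N arbitrary: k)
  case 0 then show ?case by (simp add: W_def)
next
  case (Suc N)
  define D1 where "D1 = {d. d < p \<and> 2 * d > p}"
  define D0 where "D0 = {d. d < p \<and> \<not> 2 * d > p}"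
  define \<beta> where "\<beta> = real (card D0) / real p"
  have fD: "finite D1" "finite D0" unfolding D1_def D0_def by auto
  have "D1 \<union> D0 = {..<p}" "D1 \<inter> D0 = {}" unfolding D1_def D0_def by auto
  then have b01: "card D1 + card D0 = p" using fD by (metis card_Un_disjoint card_lessThan)
  have fW: "finite (W p M j)" for M j unfolding W_def by auto
  show ?case
  proof (cases k)
    case 0 then show ?thesis by (simp add: W_def)
  next
    case (Suc k')
    let ?f = "\<lambda>(d, w). d + p * w"
    have sub: "W p (Suc N) k \<subseteq> ?f ` (D1 \<times> W p N k' \<union> D0 \<times> W p N k)"
    proof
      fix x assume x: "x \<in> W p (Suc N) k"
      have xe: "x = ?f (x mod p, x div p)" by simp
      have "x div p < p ^ N" using x unfolding W_def
        by (simp add: less_mult_imp_div_less mult.commute)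
      moreover have "cnt p (Suc N) x = (if 2 * (x mod p) > p then 1 else 0) + cnt p N (x div p)"
        by simp
      ultimately have "(x mod p, x div p) \<in> D1 \<times> W p N k' \<union> D0 \<times> W p N k"
        using x Suc p1 unfolding W_def D1_def D0_def by (auto split: if_splits)
      then show "x \<in> ?f ` (D1 \<times> W p N k' \<union> D0 \<times> W p N k)" using xe by blast
    qed
    have "card (W p (Suc N) k) \<le> card (?f ` (D1 \<times> W p N k' \<union> D0 \<times> W p N k))"
      using sub fD fW by (intro card_mono) auto
    also have "\<dots> \<le> card (D1 \<times> W p N k' \<union> D0 \<times> W p N k)" by (rule card_image_le) (use fD fW in auto)
    also have "\<dots> \<le> card (D1 \<times> W p N k') + card (D0 \<times> W p N k)" by (rule card_Un_le)
    also have "\<dots> = card D1 * card (W p N k') + card D0 * card (W p N k)" by (simp add: card_cartesian_product)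
    finally have "real (card (W p (Suc N) k)) \<le> real (card D1) * real (card (W p N k')) + real (card D0) * real (card (W p N k))"
      by (metis of_nat_add of_nat_le_iff of_nat_mult)
    also have "\<dots> \<le> real (card D1) * (real p ^ N * r \<beta> N k') + real (card D0) * (real p ^ N * r \<beta> N k)"
      using Suc.IH unfolding \<beta>_def D0_def by (intro add_mono mult_left_mono) auto
    also have "\<dots> = real p ^ Suc N * r \<beta> (Suc N) k"
    proof -
      have "1 - \<beta> = real (card D1) / real p" unfolding \<beta>_def using b01 p1
        by (simp add: field_simps flip: of_nat_add)
      have pp: "real p ^ Suc N = real p * real p ^ N" by simp
      have e1: "real p * (1 - \<beta>) = real (card D1)" using \<open>1 - \<beta> = _\<close> p1 by simp
      have e2: "real p * \<beta> = real (card D0)" unfolding \<beta>_def using p1 by simp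
      have "real p ^ N * (real p * ((1 - \<beta>) * r \<beta> N k' + \<beta> * r \<beta> N k))
          = real p ^ N * ((real p * (1 - \<beta>)) * r \<beta> N k' + (real p * \<beta>) * r \<beta> N k)"
        by (simp add: algebra_simps)
      then have "real (card D1) * (real p ^ N * r \<beta> N k') + real (card D0) * (real p ^ N * r \<beta> N k)
          = real p ^ N * (real p * ((1 - \<beta>) * r \<beta> N k' + \<beta> * r \<beta> N k))"
        unfolding e1 e2 by (simp add: algebra_simps)
      then show ?thesis using Suc pp by simp
    qed
    finally show ?thesis unfolding \<beta>_def D0_def .
  qed
qed


lemma per_mult:
  fixes P q :: nat
  assumes per: "\<forall>s. s \<in> Q \<longleftrightarrow> s + P \<in> Q"
  shows "s \<in> Q \<longleftrightarrow> s + q * P \<in> Q"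
proof (induction q)
  case 0 then show ?case by simp
next
  case (Suc q)
  have "s + Suc q * P = (s + q * P) + P" by simp
  then show ?case using Suc per by metis
qed

lemma period_count:
  fixes P q :: nat
  assumes per: "\<forall>s. s \<in> Q \<longleftrightarrow> s + P \<in> Q"
  shows "card {s. s < q * P \<and> s \<in> Q} = q * card {s. s < P \<and> s \<in> Q}"
proof (induction q)
  case 0 then show ?case by simp
next
  case (Suc q)
  have eq: "{s. s < Suc q * P \<and> s \<in> Q} =
      {s. s < q * P \<and> s \<in> Q} \<union> (\<lambda>s. s + q * P) ` {s. s < P \<and> s \<in> Q}"
  proof (rule equalityI; rule subsetI)
    fix x assume x: "x \<in> {s. s < Suc q * P \<and> s \<in> Q}"
    show "x \<in> {s. s < q * P \<and> s \<in> Q} \<union> (\<lambda>s. s + q * P) ` {s. s < P \<and> s \<in> Q}"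
    proof (cases "x < q * P")
      case True then show ?thesis using x by simp
    next
      case False
      then have "x = (x - q * P) + q * P" by simp
      moreover have "x - q * P < P" using x False by auto
      moreover have "x - q * P \<in> Q" using per_mult[OF per, of "x - q * P" q] x False by simp
      ultimately show ?thesis by blast
    qed
  next
    fix x assume "x \<in> {s. s < q * P \<and> s \<in> Q} \<union> (\<lambda>s. s + q * P) ` {s. s < P \<and> s \<in> Q}"
    then show "x \<in> {s. s < Suc q * P \<and> s \<in> Q}"
      using per_mult[OF per] by auto
  qed
  have "card {s. s < Suc q * P \<and> s \<in> Q} =
      card {s. s < q * P \<and> s \<in> Q} + card ((\<lambda>s. s + q * P) ` {s. s < P \<and> s \<in> Q})"
    unfolding eq by (rule card_Un_disjoint) auto
  also have "card ((\<lambda>s. s + q * P) ` {s. s < P \<and> s \<in> Q}) = card {s. s < P \<and> s \<in> Q}"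
    by (rule card_image) (auto simp: inj_on_def)
  finally show ?case using Suc by simp
qed

lemma density_crit:
  assumes H: "\<And>\<epsilon>. \<epsilon> > 0 \<Longrightarrow> \<exists>Q P. P > 0 \<and> B \<subseteq> Q \<and> (\<forall>s. s \<in> Q \<longleftrightarrow> s + P \<in> Q)
      \<and> real (card {s. s < P \<and> s \<in> Q}) \<le> \<epsilon> * real P"
  shows "(\<lambda>a. real (card {s. s < a \<and> s \<in> B}) / real a) \<longlonglongrightarrow> 0"
proof (rule LIMSEQ_I)
  fix r :: real assume r: "0 < r"
  obtain Q P where QP: "P > 0" "B \<subseteq> Q" "\<forall>s. s \<in> Q \<longleftrightarrow> s + P \<in> Q"
      "real (card {s. s < P \<and> s \<in> Q}) \<le> r / 2 * real P"
    using H[of "r / 2"] r by auto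
  show "\<exists>no. \<forall>a\<ge>no. norm (real (card {s. s < a \<and> s \<in> B}) / real a - 0) < r"
  proof (intro exI allI impI)
    fix a assume a: "a \<ge> Suc P"
    define q where "q = a div P + 1"
    have aq: "a < q * P" using QP(1) unfolding q_def
      by (metis add.commute div_mult_mod_eq mod_less_divisor mult.commute mult_Suc nat_add_left_cancel_less plus_1_eq_Suc)
    have qa0: "q * P \<le> a + P" unfolding q_def by (simp add: add.commute)
    then have qa: "real q * real P \<le> real a + real P" by (metis of_nat_add of_nat_le_iff of_nat_mult)
    have "card {s. s < a \<and> s \<in> B} \<le> card {s. s < q * P \<and> s \<in> Q}"
      using aq QP(2) by (intro card_mono) auto
    also have "\<dots> = q * card {s. s < P \<and> s \<in> Q}" by (rule period_count[OF QP(3)])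
    finally have "real (card {s. s < a \<and> s \<in> B}) \<le> real q * real (card {s. s < P \<and> s \<in> Q})"
      by (metis of_nat_le_iff of_nat_mult)
    also have "\<dots> \<le> real q * (r / 2 * real P)" using QP(4) by (intro mult_left_mono) auto
    also have "\<dots> = r / 2 * (real q * real P)" by simp
    also have "\<dots> \<le> r / 2 * (real a + real P)" using qa r by (intro mult_left_mono) auto
    also have "\<dots> < r / 2 * (2 * real a)" using a r by (intro mult_strict_left_mono) auto
    finally have "real (card {s. s < a \<and> s \<in> B}) < r * real a" by simp
    moreover have "real a > 0" using a by simp
    ultimately show "norm (real (card {s. s < a \<and> s \<in> B}) / real a - 0) < r"
      by (simp add: divide_less_eq)
  qed
qed


lemma digits_eq:
  fixes x p :: nat
  assumes "p > 0"
  shows "(x div p ^ e) mod p ^ N = (x mod p ^ (e + N)) div p ^ e"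
proof -
  have "x mod (p ^ e * p ^ N) = p ^ e * (x div p ^ e mod p ^ N) + x mod p ^ e" by (rule mod_mult2_eq)
  then have "x mod p ^ (e + N) = (x mod p ^ e) + (x div p ^ e mod p ^ N) * p ^ e"
    by (simp add: power_add algebra_simps)
  moreover have "((x mod p ^ e) + (x div p ^ e mod p ^ N) * p ^ e) div p ^ e = (x div p ^ e mod p ^ N) + (x mod p ^ e) div p ^ e"
    using assms by (intro div_mult_self1) simp
  ultimately show ?thesis using assms by simp
qed

lemma coprime_2_pow:
  assumes p: "prime p" "p \<noteq> 2"
  shows "coprime (p ^ n) ((2::nat) ^ s)"
proof -
  have "coprime p (2::nat)" using primes_coprime[OF p(1) two_is_prime_nat] p(2) by simp
  then show ?thesis by simp
qed

lemma no_collision: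
  fixes p e u T N s s' :: nat
  assumes p: "prime p" "p \<noteq> 2" and e: "e \<ge> 2" and u: "\<not> p dvd u"
    and XT: "(2::nat) ^ T = 1 + p ^ e * u" and T0: "T > 0"
    and ss: "s < s'" "s' < T * p ^ N" and md: "s mod T = s' mod T"
    and dg: "((2::nat) ^ s div p ^ e) mod p ^ N = (2 ^ s' div p ^ e) mod p ^ N"
  shows False
proof -
  have p1: "p > 1" using p prime_gt_1_nat by blast
  have "T dvd s' - s" using md ss by (metis less_imp_le mod_eq_dvd_iff_nat)
  then obtain c where c: "s' - s = T * c" by blast
  have s'e: "s' = s + T * c" using c ss by simp
  have c0: "c > 0" using c ss by (cases c) auto
  have cN: "c < p ^ N" using s'e ss by (metis add_lessD1 mult.commute mult_less_cancel2 add.commute)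
  have pw: "(2::nat) ^ s' = 2 ^ s * (1 + p ^ e * u) ^ c"
    using s'e XT by (simp add: power_add power_mult)
  obtain w where w: "(1 + p ^ e * u) ^ c = 1 + c * p ^ e * u + (p ^ e)\<^sup>2 * w"
    using pow_expand by blast
  have "(2::nat) ^ s' = 2 ^ s + p ^ e * (2 ^ s * (c * u + p ^ e * w))"
    using pw w by (simp add: algebra_simps power2_eq_square)
  then have m1: "(2::nat) ^ s' mod p ^ e = 2 ^ s mod p ^ e" by simp
  have m2: "(2::nat) ^ s' mod p ^ (e + N) = 2 ^ s mod p ^ (e + N)"
  proof -
    have "(2::nat) ^ s mod p ^ (e + N) = 2 ^ s mod p ^ e + (2 ^ s div p ^ e mod p ^ N) * p ^ e"
      using mod_mult2_eq[of "(2::nat) ^ s" "p ^ e" "p ^ N"] by (simp add: power_add algebra_simps)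
    moreover have "(2::nat) ^ s' mod p ^ (e + N) = 2 ^ s' mod p ^ e + (2 ^ s' div p ^ e mod p ^ N) * p ^ e"
      using mod_mult2_eq[of "(2::nat) ^ s'" "p ^ e" "p ^ N"] by (simp add: power_add algebra_simps)
    ultimately show ?thesis using m1 dg by simp
  qed
  have le: "(2::nat) ^ s \<le> 2 ^ s'" using ss by simp
  have "p ^ (e + N) dvd 2 ^ s' - 2 ^ s" using m2 le by (simp add: mod_eq_dvd_iff_nat)
  also have "(2::nat) ^ s' - 2 ^ s = 2 ^ s * ((1 + p ^ e * u) ^ c - 1)"
    using pw by (simp add: diff_mult_distrib2)
  finally have "p ^ (e + N) dvd (1 + p ^ e * u) ^ c - 1"
    using coprime_dvd_mult_right_iff[OF coprime_2_pow[OF p]] by blast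
  then show False using noncong[OF p(1) e u c0 cN] by blast
qed


lemma prime_density:
  fixes p k :: nat
  assumes p: "prime p" and p2: "p \<noteq> 2"
  shows "(\<lambda>a. real (card {s. s < a \<and> s \<in> {s. \<not> p ^ k dvd ((2::nat) ^ (s + 1) choose 2 ^ s)}}) / real a)
           \<longlonglongrightarrow> 0"
proof (rule density_crit)
  fix \<epsilon> :: real assume \<epsilon>: "\<epsilon> > 0"
  have p1: "p > 1" using p prime_gt_1_nat by blast
  have p3: "p \<ge> 3" using p1 p2 by linarith
  define T where "T = totient (p ^ 2)"
  have T0: "T > 0" using p1 by (simp add: T_def)
  have "[2 ^ T = 1] (mod p ^ 2)" unfolding T_def
    by (rule euler_theorem) (metis coprime_2_pow[OF p p2, of 2 1] coprime_commute power_one_right)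
  then have d2: "p ^ 2 dvd 2 ^ T - 1" by (rule cong_to_1_nat)
  have X0: "(2::nat) ^ T - 1 \<noteq> 0"
  proof -
    have "(2::nat) ^ T \<ge> 2 ^ 1" using T0 by (intro power_increasing) auto
    then show ?thesis by simp
  qed
  have nu: "\<not> is_unit p" using p1 by simp
  define e where "e = multiplicity p ((2::nat) ^ T - 1)"
  have e2: "e \<ge> 2" unfolding e_def using multiplicity_geI[OF X0 nu d2] .
  obtain u where u: "(2::nat) ^ T - 1 = p ^ e * u" "\<not> p dvd u"
    using multiplicity_decompose'[OF X0 nu] unfolding e_def by blast
  have XT: "(2::nat) ^ T = 1 + p ^ e * u"
  proof -
    have "(2::nat) ^ T \<ge> 1" by simp
    then show ?thesis using u(1) by linarith
  qed
  define \<beta> where "\<beta> = real (card {d. d < p \<and> \<not> 2 * d > p}) / real p"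
  have cD: "card {d. d < p \<and> \<not> 2 * d > p} < p"
  proof -
    have "{d. d < p \<and> \<not> 2 * d > p} < {..<p}"
    proof
      show "{d. d < p \<and> \<not> 2 * d > p} \<subseteq> {..<p}" by auto
      have "p - 1 \<in> {..<p}" using p1 by simp
      moreover have "p - 1 \<notin> {d. d < p \<and> \<not> 2 * d > p}" using p3 by auto
      ultimately show "{d. d < p \<and> \<not> 2 * d > p} \<noteq> {..<p}" by blast
    qed
    then show ?thesis using psubset_card_mono[of "{..<p}"] by simp
  qed
  have \<beta>0: "\<beta> \<ge> 0" unfolding \<beta>_def by simp
  have \<beta>1: "\<beta> < 1" unfolding \<beta>_def using cD p1 by (simp add: divide_less_eq)
  have "eventually (\<lambda>N. r \<beta> N k < \<epsilon>) sequentially"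
    using order_tendstoD(2)[OF r_lim[OF \<beta>0 \<beta>1, of k] \<epsilon>] .
  then obtain N where N: "r \<beta> N k < \<epsilon>" unfolding eventually_sequentially by blast
  define P where "P = T * p ^ N"
  define Q where "Q = {s. cnt p N (((2::nat) ^ s div p ^ e) mod p ^ N) < k}"
  have P0: "P > 0" unfolding P_def using T0 p1 by simp
  have BQ: "{s. \<not> p ^ k dvd ((2::nat) ^ (s + 1) choose 2 ^ s)} \<subseteq> Q"
  proof
    fix s assume s: "s \<in> {s. \<not> p ^ k dvd ((2::nat) ^ (s + 1) choose 2 ^ s)}"
    show "s \<in> Q"
    proof (rule ccontr)
      assume "s \<notin> Q"
      then have k1: "k \<le> cnt p N ((2::nat) ^ s div p ^ e)"
        unfolding Q_def using cnt_mod[of p N] p1 by simp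
      have "cnt p (e + N) ((2::nat) ^ s) = cnt p e (2 ^ s) + cnt p N (2 ^ s div p ^ e)"
        by (rule cnt_split)
      then have "k \<le> cnt p (e + N) ((2::nat) ^ s)" using k1 by simp
      then have "p ^ k dvd p ^ cnt p (e + N) ((2::nat) ^ s)" by (rule le_imp_power_dvd)
      also have "\<dots> dvd ((2 * 2 ^ s) choose 2 ^ s)" by (rule binom_cnt[OF p])
      finally show False using s by simp
    qed
  qed
  have per: "\<forall>s. s \<in> Q \<longleftrightarrow> s + P \<in> Q"
  proof
    fix s
    obtain u' where u': "(1 + p ^ e * u) ^ (p ^ N) = 1 + p ^ (e + N) * u'"
      using tower[OF p e2 u(2)] by blast
    have "(2::nat) ^ (s + P) = 2 ^ s * (1 + p ^ e * u) ^ (p ^ N)"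
      unfolding P_def using XT by (simp add: power_add power_mult)
    also have "\<dots> = 2 ^ s + p ^ (e + N) * (2 ^ s * u')" using u' by (simp add: algebra_simps)
    finally have "(2::nat) ^ (s + P) mod p ^ (e + N) = 2 ^ s mod p ^ (e + N)" by simp
    then have "((2::nat) ^ (s + P) div p ^ e) mod p ^ N = (2 ^ s div p ^ e) mod p ^ N"
      using digits_eq[of p] p1 by simp
    then show "s \<in> Q \<longleftrightarrow> s + P \<in> Q" unfolding Q_def by simp
  qed
  define \<phi> where "\<phi> = (\<lambda>s. (s mod T, ((2::nat) ^ s div p ^ e) mod p ^ N))"
  have inj: "inj_on \<phi> {s. s < P \<and> s \<in> Q}"
  proof (rule inj_onI)
    fix s s' assume s: "s \<in> {s. s < P \<and> s \<in> Q}" and s': "s' \<in> {s. s < P \<and> s \<in> Q}"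
      and eq: "\<phi> s = \<phi> s'"
    show "s = s'"
    proof (rule ccontr)
      assume "s \<noteq> s'"
      then consider "s < s'" | "s' < s" by linarith
      then show False
      proof cases
        case 1
        then show False using no_collision[OF p p2 e2 u(2) XT T0 1, of N] s s' eq
          unfolding \<phi>_def P_def by auto
      next
        case 2
        then show False using no_collision[OF p p2 e2 u(2) XT T0 2, of N] s s' eq
          unfolding \<phi>_def P_def by auto
      qed
    qed
  qed
  have img: "\<phi> ` {s. s < P \<and> s \<in> Q} \<subseteq> {..<T} \<times> W p N k"
    unfolding \<phi>_def Q_def W_def using T0 p1 by auto
  have "card {s. s < P \<and> s \<in> Q} \<le> card ({..<T} \<times> W p N k)"
    by (rule card_inj_on_le[OF inj img]) (auto simp: W_def)
  also have "\<dots> = T * card (W p N k)" by (simp add: card_cartesian_product)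
  finally have "real (card {s. s < P \<and> s \<in> Q}) \<le> real T * real (card (W p N k))"
    by (metis of_nat_le_iff of_nat_mult)
  also have "\<dots> \<le> real T * (real p ^ N * r \<beta> N k)"
    using W_card[OF p1, of N k] unfolding \<beta>_def by (intro mult_left_mono) auto
  also have "\<dots> \<le> real T * (real p ^ N * \<epsilon>)"
    using N by (intro mult_left_mono) auto
  also have "\<dots> = \<epsilon> * real P" unfolding P_def by simp
  finally show "\<exists>Q P. P > 0 \<and> {s. \<not> p ^ k dvd ((2::nat) ^ (s + 1) choose 2 ^ s)} \<subseteq> Q \<and>
      (\<forall>s. s \<in> Q \<longleftrightarrow> s + P \<in> Q) \<and> real (card {s. s < P \<and> s \<in> Q}) \<le> \<epsilon> * real P"
    using P0 BQ per by blast
qed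


theorem corollary3p3:
  fixes m :: nat
  assumes "odd m" and "m > 0"
  shows "(\<lambda>a::nat. real (card {s::nat. s < a \<and> \<not> m dvd ((2::nat) ^ (s + 1) choose 2 ^ s)}) / real a)
           \<longlonglongrightarrow> 0"
proof -
  define F where "F = prime_factors m"
  define A where "A = (\<lambda>p. {s. \<not> p ^ multiplicity p m dvd ((2::nat) ^ (s + 1) choose 2 ^ s)})"
  define g where "g = (\<lambda>a p. real (card {s. s < a \<and> s \<in> A p}) / real a)"
  have fF: "finite F" unfolding F_def by simp
  have lim: "(\<lambda>a. \<Sum>p\<in>F. g a p) \<longlonglongrightarrow> 0"
  proof (rule tendsto_null_sum)
    fix p assume "p \<in> F"
    then have pp: "prime p" "p dvd m" unfolding F_def using assms by auto
    have "p \<noteq> 2" using pp(2) assms(1) by auto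
    then show "(\<lambda>a. g a p) \<longlonglongrightarrow> 0" unfolding g_def A_def using prime_density[OF pp(1)] by blast
  qed
  have bound: "real (card {s. s < a \<and> \<not> m dvd ((2::nat) ^ (s + 1) choose 2 ^ s)}) / real a
      \<le> (\<Sum>p\<in>F. g a p)" for a
  proof -
    have sub: "{s. s < a \<and> \<not> m dvd ((2::nat) ^ (s + 1) choose 2 ^ s)} \<subseteq> (\<Union>p\<in>F. {s. s < a \<and> s \<in> A p})"
    proof
      fix s assume s: "s \<in> {s. s < a \<and> \<not> m dvd ((2::nat) ^ (s + 1) choose 2 ^ s)}"
      show "s \<in> (\<Union>p\<in>F. {s. s < a \<and> s \<in> A p})"
      proof (rule ccontr)
        assume H: "s \<notin> (\<Union>p\<in>F. {s. s < a \<and> s \<in> A p})"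
        have C0: "((2::nat) ^ (s + 1) choose 2 ^ s) \<noteq> 0" by simp
        have "m dvd ((2::nat) ^ (s + 1) choose 2 ^ s)"
        proof (rule multiplicity_le_imp_dvd)
          show "m \<noteq> 0" using assms by simp
          fix p :: nat assume pp: "prime p"
          show "multiplicity p m \<le> multiplicity p ((2::nat) ^ (s + 1) choose 2 ^ s)"
          proof (cases "p dvd m")
            case True
            then have "p \<in> F" unfolding F_def using pp assms by (simp add: in_prime_factors_iff)
            then have "p ^ multiplicity p m dvd ((2::nat) ^ (s + 1) choose 2 ^ s)"
              using H s unfolding A_def by auto
            moreover have "\<not> is_unit p" using prime_gt_1_nat[OF pp] by simp
            ultimately show ?thesis using multiplicity_geI[OF C0] by blast
          next
            case False
            then show ?thesis by (simp add: not_dvd_imp_multiplicity_0)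
          qed
        qed
        then show False using s by simp
      qed
    qed
    have "card {s. s < a \<and> \<not> m dvd ((2::nat) ^ (s + 1) choose 2 ^ s)}
        \<le> card (\<Union>p\<in>F. {s. s < a \<and> s \<in> A p})"
      using sub fF by (intro card_mono) auto
    also have "\<dots> \<le> (\<Sum>p\<in>F. card {s. s < a \<and> s \<in> A p})" by (rule card_UN_le[OF fF])
    finally have "real (card {s. s < a \<and> \<not> m dvd ((2::nat) ^ (s + 1) choose 2 ^ s)})
        \<le> (\<Sum>p\<in>F. real (card {s. s < a \<and> s \<in> A p}))"
      unfolding of_nat_sum[symmetric] of_nat_le_iff .
    then show ?thesis unfolding g_def sum_divide_distrib[symmetric]
      by (intro divide_right_mono) auto
  qed
  show ?thesis
  proof (rule tendsto_sandwich[OF _ _ tendsto_const lim])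
    show "\<forall>\<^sub>F n in sequentially. 0 \<le> real (card {s. s < n \<and> \<not> m dvd ((2::nat) ^ (s + 1) choose 2 ^ s)}) / real n"
      by (intro always_eventually allI) simp
    show "\<forall>\<^sub>F n in sequentially. real (card {s. s < n \<and> \<not> m dvd ((2::nat) ^ (s + 1) choose 2 ^ s)}) / real n \<le> (\<Sum>p\<in>F. g n p)"
      by (intro always_eventually allI bound)
  qed
qed

end
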